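(* \[ \sum_{n=0}^\infty\frac{(20n^2-4n-1)\,n^2(2n+1)}{2n-1}\cdot\frac{(-1)^n\binom{2n}{n}^5}{2^{12n}}=-\frac{2}{\pi^2}. \] *)

theory Defs
  imports "HOL-Analysis.Analysis"
begin

end

theory Submission
  imports Defs "HOL-Real_Asymp.Real_Asymp"
begin

definition cc :: "nat \<Rightarrow> real" where "cc n = real ((2*n) choose n) / 4^n"

lemma central_gen:
  fixes A B C n :: nat
  assumes h1: "Suc n * A = Suc (Suc (2*n)) * B" and h2: "Suc n * B = Suc (2*n) * C"
  shows "Suc n * A = 2*(2*n+1) * C"
proof -
  have "Suc n * (Suc n * A) = Suc (Suc (2*n)) * (Suc n * B)" using h1 by (metis mult.left_commute)
  also have "\<dots> = Suc (Suc (2*n)) * (Suc (2*n) * C)" using h2 by simp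
  also have "\<dots> = Suc n * (2*(2*n+1)*C)" by (simp add: algebra_simps)
  finally show ?thesis by (metis Suc_neq_Zero mult_left_cancel)
qed
lemma central_nat: "(Suc n) * ((2 * Suc n) choose Suc n) = 2*(2*n+1) * ((2*n) choose n)"
proof (rule central_gen)
  have e: "2 * Suc n = Suc (Suc (2*n))" by simp
  show "Suc n * (2 * Suc n choose Suc n) = Suc (Suc (2 * n)) * (Suc (2*n) choose n)"
    unfolding e by (rule Suc_times_binomial)
  have sym: "(Suc (2*n) choose n) = (Suc (2*n) choose Suc n)"
    using binomial_symmetric[of n "Suc (2*n)"] by simp
  show "Suc n * (Suc (2*n) choose n) = Suc (2 * n) * (2 * n choose n)"
    unfolding sym by (rule Suc_times_binomial)
qed
lemma central_Suc: "real ((2 * Suc n) choose Suc n) = real ((2*n) choose n) * (2*(2*real n+1)) / (real n+1)"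
proof -
  have "real (Suc n) * real ((2 * Suc n) choose Suc n) = 2*(2*real n+1) * real ((2*n) choose n)"
    using arg_cong[OF central_nat[of n], of real] by (simp only: of_nat_mult) simp
  thus ?thesis by (simp add: field_simps)
qed

lemma cc_0 [simp]: "cc 0 = 1" by (simp add: cc_def)

lemma cc_aux: fixes c x q :: real assumes "x \<ge> 0" "q > 0"
  shows "c * (2*(2*x+1)) / (x+1) / (4*q) = c / q * (2*x+1) / (2*x+2)"
  using assms by (simp add: field_split_simps)

lemma cc_Suc: "cc (Suc n) = cc n * (2*real n+1) / (2*real n+2)"
  unfolding cc_def central_Suc using cc_aux[of "real n" "4^n"] by simp

lemma cc_pos: "cc n > 0"
  by (induction n) (auto simp: cc_Suc)

lemma cc_le1: "cc n \<le> 1"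
proof (induction n)
  case (Suc n)
  have "cc (Suc n) = cc n * ((2*real n+1) / (2*real n+2))" by (simp add: cc_Suc)
  also have "\<dots> \<le> cc n * 1" using cc_pos[of n] by (intro mult_left_mono) auto
  finally show ?case using Suc by simp
qed simp

definition bb :: "nat \<Rightarrow> nat \<Rightarrow> real" where "bb n k = fact (n+k) / (fact n * fact k)"

lemma bb_0 [simp]: "bb 0 k = 1" by (simp add: bb_def)
lemma bb_0' [simp]: "bb n 0 = 1" by (simp add: bb_def)

lemma bb_Suc_n: "bb (Suc n) k = bb n k * (real n + real k + 1) / (real n + 1)"
  unfolding bb_def by (simp add: field_simps)

lemma bb_Suc_k: "bb n (Suc k) = bb n k * (real n + real k + 1) / (real k + 1)"
  unfolding bb_def by (simp add: field_simps)

lemma bb_pos: "bb n k > 0" unfolding bb_def by simp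

lemma bb_mono: "bb n k \<le> bb (Suc n) k"
proof -
  have "bb n k * 1 \<le> bb n k * ((real n + real k + 1) / (real n + 1))"
    using bb_pos[of n k] by (intro mult_left_mono) auto
  thus ?thesis by (simp add: bb_Suc_n)
qed

lemma bb_ge1: "bb n k \<ge> 1"
  by (induction n) (auto intro: order_trans[OF _ bb_mono])

lemma bb_ge: "n \<ge> 1 \<Longrightarrow> bb n k \<ge> real k + 1"
proof (induction n rule: dec_induct)
  case base thus ?case by (simp add: bb_Suc_n[of 0, simplified])
next
  case (step m) thus ?case using bb_mono[of m k] by simp
qed


definition PP :: "nat \<Rightarrow> nat \<Rightarrow> real" where
  "PP n k = 20*real n^2 + 8*real n + 1 + 24*real k*real n + 8*real k^2 + 4*real k"

definition Bs :: "nat \<Rightarrow> nat \<Rightarrow> real" where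
  "Bs n k = cc k ^ 4 * (-1)^n * cc n ^ 5 / (4^n * bb n k ^ 4)"

definition GG :: "nat \<Rightarrow> nat \<Rightarrow> real" where "GG n k = Bs n k * PP n k"
definition FF :: "nat \<Rightarrow> nat \<Rightarrow> real" where "FF n k = Bs n k * (8 * real n * (2*real n + 4*real k + 1))"

lemma g1: fixes a c ss d Q B u v :: real assumes "v>0" "u>0" "B>0" "Q>0"
  shows "(c * a/(2 * v)) ^ 4 * ss * d ^ 5 / (Q * (B * u / v) ^ 4) = c ^ 4 * ss * d ^ 5/(Q * B ^ 4) * (a ^ 4/(16 * u ^ 4))"
proof -
  have "(c * a/(2 * v)) ^ 4 = c^4 * a^4 / (16 * v^4)" by (simp add: power_divide power_mult_distrib)
  moreover have "(B * u / v) ^ 4 = B^4 * u^4 / v^4" by (simp add: power_divide power_mult_distrib)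
  ultimately show ?thesis using assms by (simp add: field_simps)
qed

lemma g2: fixes a c ss d Q B u w :: real assumes "w>0" "u>0" "B>0" "Q>0"
  shows "c ^ 4  *  (-ss)  *  (d * a/(2 * w)) ^ 5 / ((4 * Q)  *  (B * u/w) ^ 4) = c ^ 4 * ss * d ^ 5/(Q * B ^ 4)  *  (-(a ^ 5)/(128 * w * u ^ 4))"
proof -
  have w5: "w^5 = w^4*w" by (simp add: power_Suc2[symmetric])
  have "(d * a/(2 * w)) ^ 5 = d^5 * a^5 / (32 * (w^4 * w))" unfolding w5[symmetric] by (simp add: power_divide power_mult_distrib)
  moreover have "(B * u / w) ^ 4 = B^4 * u^4 / w^4" by (simp add: power_divide power_mult_distrib)
  ultimately show ?thesis using assms by (simp add: field_simps) (metis w5 mult.commute)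
qed

lemma cc_Suc': "cc (Suc n) = cc n * (2*real n+1) / (2*(real n+1))"
  using cc_Suc[of n] by (simp add: algebra_simps)

lemma Bs_Suc_k: "Bs n (Suc k) = Bs n k * ((2*real k+1)^4/(16*(real n+real k+1)^4))"
proof -
  have "Bs n (Suc k) = (cc k * (2*real k+1) / (2*(real k+1)))^4 * (-1)^n * cc n ^ 5 /
     (4^n * (bb n k * (real n + real k + 1) / (real k + 1))^4)"
    unfolding Bs_def cc_Suc' bb_Suc_k ..
  also have "\<dots> = Bs n k * ((2*real k+1)^4/(16*(real n+real k+1)^4))"
    unfolding Bs_def by (rule g1) (auto simp: bb_pos)
  finally show ?thesis .
qed

lemma Bs_Suc_n: "Bs (Suc n) k = Bs n k * (-((2*real n+1)^5)/(128*(real n+1)*(real n+real k+1)^4))"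
proof -
  have "Bs (Suc n) k = cc k ^ 4 * (- ((-1)^n)) * (cc n * (2*real n+1) / (2*(real n+1)))^5 /
     ((4*4^n) * (bb n k * (real n + real k + 1) / (real n + 1))^4)"
    unfolding Bs_def cc_Suc' bb_Suc_n by simp
  also have "\<dots> = Bs n k * (-((2*real n+1)^5)/(128*(real n+1)*(real n+real k+1)^4))"
    unfolding Bs_def by (rule g2) (auto simp: bb_pos)
  finally show ?thesis .
qed

lemma poly_id: fixes n k :: real shows
  "(2*k+1)^4 * (20*n^2 + 8*n + 1 + 24*(k+1)*n + 8*(k+1)^2 + 4*(k+1))
   - 16*(n+k+1)^4 * (20*n^2 + 8*n + 1 + 24*k*n + 8*k^2 + 4*k)
   = - ((2*n+1)^5*(2*n+4*k+3)) - 128*n*(2*n+4*k+1)*(n+k+1)^4"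
  by (simp add: algebra_simps eval_nat_numeral)

lemma g3: fixes a u P1 P0 :: real assumes "u > 0"
  shows "a^4/(16*u^4)*P1 - P0 = (a^4*P1 - 16*u^4*P0)/(16*u^4)"
  using assms by (simp add: field_simps)

lemma g4: fixes b u w c F0 :: real assumes "u > 0" "w > 0"
  shows "(-(b^5)/(128*w*u^4))*(8*w*c) - F0 = (-(b^5*c) - 16*u^4*F0)/(16*u^4)"
  using assms by (simp add: field_simps)

lemma WZ: "GG n (Suc k) - GG n k = FF (Suc n) k - FF n k"
proof -
  define x where "x = real n"
  define y where "y = real k"
  have x: "x \<ge> 0" and y: "y \<ge> 0" by (auto simp: x_def y_def)
  have u: "x + y + 1 > 0" using x y by simp
  have A: "GG n (Suc k) - GG n k = Bs n k * ((2*y+1)^4/(16*(x+y+1)^4) * PP n (Suc k) - PP n k)"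
    by (simp add: GG_def Bs_Suc_k right_diff_distrib mult.assoc x_def y_def)
  have P1: "PP n (Suc k) = 20*x^2 + 8*x + 1 + 24*(y+1)*x + 8*(y+1)^2 + 4*(y+1)"
    by (simp add: PP_def x_def y_def algebra_simps)
  have P0: "PP n k = 20*x^2 + 8*x + 1 + 24*y*x + 8*y^2 + 4*y"
    by (simp add: PP_def x_def y_def)
  have B: "FF (Suc n) k - FF n k = Bs n k * ((-((2*x+1)^5)/(128*(x+1)*(x+y+1)^4)) * (8*(x+1)*(2*x+4*y+3))
      - 8*x*(2*x+4*y+1))"
  proof -
    have "FF (Suc n) k = Bs n k * ((-((2*x+1)^5)/(128*(x+1)*(x+y+1)^4)) * (8*(x+1)*(2*x+4*y+3)))"
      unfolding FF_def Bs_Suc_n x_def y_def by (simp add: algebra_simps)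
    moreover have "FF n k = Bs n k * (8*x*(2*x+4*y+1))"
      unfolding FF_def x_def y_def by simp
    ultimately show ?thesis by (simp add: right_diff_distrib)
  qed
  have num: "- ((2*x+1)^5*(2*x+4*y+3)) - 16*(x+y+1)^4*(8*x*(2*x+4*y+1))
      = - ((2*x+1)^5*(2*x+4*y+3)) - 128*x*(2*x+4*y+1)*(x+y+1)^4"
    by (simp add: algebra_simps)
  have C: "(-((2*x+1)^5)/(128*(x+1)*(x+y+1)^4)) * (8*(x+1)*(2*x+4*y+3)) - 8*x*(2*x+4*y+1)
     = (- ((2*x+1)^5*(2*x+4*y+3)) - 128*x*(2*x+4*y+1)*(x+y+1)^4)/(16*(x+y+1)^4)"
    using g4[OF u, of "x+1" "2*x+1" "2*x+4*y+3" "8*x*(2*x+4*y+1)"] x num by (simp add: mult.assoc)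
  have D: "(2*y+1)^4/(16*(x+y+1)^4) * PP n (Suc k) - PP n k
     = (- ((2*x+1)^5*(2*x+4*y+3)) - 128*x*(2*x+4*y+1)*(x+y+1)^4)/(16*(x+y+1)^4)"
    unfolding g3[OF u] P1 P0 by (rule arg_cong[where f="\<lambda>t. t / (16*(x+y+1)^4)"], rule poly_id)
  show ?thesis unfolding A B C D ..
qed


subsection \<open>Bounds and summability\<close>

definition qq :: "nat \<Rightarrow> real" where "qq n = (real n + 1)^2 / 4^n"

lemma qq_nonneg: "qq n \<ge> 0" by (simp add: qq_def)

lemma qq_ratio_aux: fixes x :: real assumes "x \<ge> 2"
  shows "(x + 2)^2 \<le> 2 * (x+1)^2"
proof -
  have "x * x \<ge> 2 * 2" using assms by (intro mult_mono) auto
  thus ?thesis by (simp add: power2_eq_square algebra_simps)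
qed

lemma summable_qq: "summable qq"
proof (rule summable_ratio_test[of "1/2" 2])
  fix n :: nat assume n: "n \<ge> 2"
  have e1: "real (Suc n) + 1 = real n + 2" by simp
  have e: "qq (Suc n) = (real n + 2)^2 / (4*4^n)" unfolding qq_def e1 by simp
  have "(real n + 2)^2 \<le> 2 * (real n + 1)^2" using n by (intro qq_ratio_aux) auto
  hence "(real n + 2)^2 / (4 * 4^n) \<le> 2 * (real n + 1)^2 / (4 * 4^n)"
    by (intro divide_right_mono) auto
  also have "\<dots> = 1/2 * qq n" by (simp add: qq_def)
  finally have "qq (Suc n) \<le> 1/2 * qq n" unfolding e .
  thus "norm (qq (Suc n)) \<le> 1/2 * norm (qq n)" using qq_nonneg[of n] qq_nonneg[of "Suc n"] by simp
qed simp

lemma summable_qq_Suc: "summable (\<lambda>n. qq (Suc n))"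
  using summable_qq by (subst summable_Suc_iff)

lemma abs_Bs: "\<bar>Bs n k\<bar> = cc k ^ 4 * cc n ^ 5 / (4^n * bb n k ^ 4)"
  using cc_pos[of k] cc_pos[of n] bb_pos[of n k]
  by (simp add: Bs_def abs_mult power_abs)

lemma Bs_bound: "\<bar>Bs n k\<bar> \<le> 1 / 4^n"
proof -
  have "cc k ^ 4 * cc n ^ 5 \<le> 1 * 1"
    using cc_pos[of k] cc_pos[of n] cc_le1[of k] cc_le1[of n]
    by (intro mult_mono power_le_one) auto
  moreover have "4^n * 1 \<le> (4::real)^n * bb n k ^ 4"
    using bb_ge1[of n k] by (intro mult_left_mono one_le_power) auto
  ultimately have "cc k ^ 4 * cc n ^ 5 / (4^n * bb n k ^ 4) \<le> 1 / (4^n * 1)"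
    using cc_pos[of k] cc_pos[of n]
    by (intro frac_le) auto
  thus ?thesis by (simp add: abs_Bs)
qed

lemma Bs_bound': assumes "n \<ge> 1" shows "\<bar>Bs n k\<bar> \<le> 1 / (4^n * (real k + 1)^4)"
proof -
  have "cc k ^ 4 * cc n ^ 5 \<le> 1 * 1"
    using cc_pos[of k] cc_pos[of n] cc_le1[of k] cc_le1[of n]
    by (intro mult_mono power_le_one) auto
  moreover have "4^n * (real k + 1)^4 \<le> (4::real)^n * bb n k ^ 4"
    using bb_ge[OF assms, of k] by (intro mult_left_mono power_mono) auto
  ultimately have "cc k ^ 4 * cc n ^ 5 / (4^n * bb n k ^ 4) \<le> 1 / (4^n * (real k + 1)^4)"
    using cc_pos[of k] cc_pos[of n]
    by (intro frac_le) auto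
  thus ?thesis by (simp add: abs_Bs)
qed

lemma PP_nonneg: "PP n k \<ge> 0" by (simp add: PP_def)

lemma PP_bound_aux: fixes x y :: real assumes "x \<ge> 0" "y \<ge> 0"
  shows "20*x^2 + 8*x + 1 + 24*y*x + 8*y^2 + 4*y \<le> 41 * ((x+1)^2 * (y+1)^2)"
proof -
  have "(x+1)^2 * (y+1)^2 = (x+1)^2 + (x+1)^2 * (y^2 + 2*y)" by (simp add: power2_eq_square algebra_simps)
  have h1: "1 \<le> (x+1)^2" using assms by (intro one_le_power) auto
  moreover have "(x+1)^2 * (y^2 + 2*y) \<ge> 1 * (y^2+2*y)"
    using assms h1 by (intro mult_right_mono) auto
  moreover have "(x+1)^2 * (y^2 + 2*y) \<ge> (x+1) * (2*y)"
  proof -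
    have "(x+1)^2 \<ge> (x+1)" using assms by (simp add: power2_eq_square)
    hence "(x+1)^2 * (y^2 + 2*y) \<ge> (x+1) * (y^2 + 2*y)" using assms by (intro mult_right_mono) auto
    moreover have "(x+1) * (y^2 + 2*y) \<ge> (x+1) * (2*y)" using assms by (intro mult_left_mono) auto
    ultimately show ?thesis by linarith
  qed
  moreover have h: "(x+1)*(x+1) \<ge> 1*1" using assms by (intro mult_mono) auto
  ultimately show ?thesis using assms by (simp add: power2_eq_square algebra_simps)
qed

lemma PP_bound: "PP n k \<le> 41 * ((real n + 1)^2 * (real k + 1)^2)"
  unfolding PP_def by (rule PP_bound_aux) auto

lemma GG_bound: "\<bar>GG n k\<bar> \<le> 41 * (real k + 1)^2 * qq n"
proof -
  have "\<bar>GG n k\<bar> = \<bar>Bs n k\<bar> * PP n k" by (simp add: GG_def abs_mult PP_nonneg)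
  also have "\<dots> \<le> (1/4^n) * (41 * ((real n + 1)^2 * (real k + 1)^2))"
    by (intro mult_mono Bs_bound PP_bound) (auto simp: PP_nonneg)
  also have "\<dots> = 41 * (real k + 1)^2 * qq n" by (simp add: qq_def)
  finally show ?thesis .
qed

lemma gb_aux: fixes t Q m :: real assumes "t > 0" "Q > 0"
  shows "1 / (Q * t^4) * (41 * (m * t^2)) = 41 * (m / Q) / t^2"
  using assms by (simp add: field_simps power2_eq_square power4_eq_xxxx)

lemma GG_bound': assumes "n \<ge> 1" shows "\<bar>GG n k\<bar> \<le> 41 * qq n / (real k + 1)^2"
proof -
  have "\<bar>GG n k\<bar> = \<bar>Bs n k\<bar> * PP n k" by (simp add: GG_def abs_mult PP_nonneg)
  also have "\<dots> \<le> (1 / (4^n * (real k + 1)^4)) * (41 * ((real n + 1)^2 * (real k + 1)^2))"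
    by (intro mult_mono Bs_bound'[OF assms] PP_bound) (auto simp: PP_nonneg)
  also have "\<dots> = 41 * qq n / (real k + 1)^2"
    unfolding qq_def by (rule gb_aux) auto
  finally show ?thesis .
qed

lemma FF_bound: "\<bar>FF n k\<bar> \<le> 8 * (4 * real k + 2) * qq n"
proof -
  have a: "8 * real n * (2*real n + 4*real k + 1) \<le> 8 * (4 * real k + 2) * (real n + 1)^2"
  proof -
    have "real n * (2*real n + 1) \<le> 2 * (real n + 1)^2" by (simp add: power2_eq_square algebra_simps)
    moreover have "real n * (4 * real k) \<le> (4 * real k) * (real n + 1)^2"
      by (simp add: power2_eq_square algebra_simps)
    ultimately show ?thesis by (simp add: algebra_simps)
  qed
  have "\<bar>FF n k\<bar> = \<bar>Bs n k\<bar> * (8 * real n * (2*real n + 4*real k + 1))" by (simp add: FF_def abs_mult)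
  also have "\<dots> \<le> (1/4^n) * (8 * (4 * real k + 2) * (real n + 1)^2)"
    by (intro mult_mono Bs_bound a) auto
  also have "\<dots> = 8 * (4 * real k + 2) * qq n" by (simp add: qq_def)
  finally show ?thesis .
qed

lemma summable_GG: "summable (\<lambda>n. GG n k)"
  by (rule summable_comparison_test'[OF summable_mult[OF summable_qq, of "41 * (real k + 1)^2"]])
     (use GG_bound in auto)

lemma summable_FF: "summable (\<lambda>n. FF n k)"
  by (rule summable_comparison_test'[OF summable_mult[OF summable_qq, of "8 * (4 * real k + 2)"]])
     (use FF_bound in auto)

definition SS :: "nat \<Rightarrow> real" where "SS k = (\<Sum>n. GG n k)"

lemma SS_Suc: "SS (Suc k) = SS k"
proof -
  have "(\<lambda>n. FF n k) \<longlonglongrightarrow> 0" by (rule summable_LIMSEQ_zero[OF summable_FF])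
  from telescope_sums[OF this] have "(\<lambda>n. FF (Suc n) k - FF n k) sums (0 - FF 0 k)" .
  hence "(\<lambda>n. GG n (Suc k) - GG n k) sums 0" by (simp add: WZ FF_def)
  moreover have "(\<lambda>n. GG n (Suc k) - GG n k) sums (SS (Suc k) - SS k)"
    unfolding SS_def by (intro sums_diff summable_sums summable_GG)
  ultimately show ?thesis using sums_unique2 by fastforce
qed

lemma SS_const: "SS k = SS 0"
  by (induction k) (simp_all add: SS_Suc)

subsection \<open>Wallis\<close>

definition WW :: "nat \<Rightarrow> real" where "WW n = (\<Prod>k=1..n. (4*real k^2) / (4*real k^2 - 1))"

lemma wallis_gen: fixes a w p r t :: real assumes "p > 0" "r > 0" "t > 0"
  shows "a * (p/(2*t))^2 * r * (w * (4*t^2 / (p*r))) = a * p * w"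
  using assms by (simp add: field_simps power2_eq_square)

lemma wallis_aux: fixes a w x :: real assumes "x \<ge> 0" "a * (2*x+1) * w = 1"
  shows "a * ((2*x+1)/(2*(x+1)))^2 * (2*x+3) * (w * (4*(x+1)^2 / (4*(x+1)^2 - 1))) = 1"
proof -
  have e: "4*(x+1)^2 - 1 = (2*x+1)*(2*x+3)" by (simp add: power2_eq_square algebra_simps)
  show ?thesis unfolding e using wallis_gen[of "2*x+1" "2*x+3" "x+1" a w] assms by simp
qed

lemma cc_WW: "cc n ^ 2 * (2 * real n + 1) * WW n = 1"
proof (induction n)
  case 0 thus ?case by (simp add: WW_def)
next
  case (Suc n)
  have W0: "WW (Suc n) = WW n * (4*(1 + real n)^2 / (4*(1 + real n)^2 - 1))"
    unfolding WW_def by (subst prod.nat_ivl_Suc') (auto simp: mult.commute)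
  have W: "WW (Suc n) = WW n * (4*(real n+1)^2 / (4*(real n+1)^2 - 1))"
    unfolding W0 by (simp add: add.commute)
  have "cc (Suc n) ^ 2 * (2 * real (Suc n) + 1) * WW (Suc n) =
     cc n ^ 2 * ((2*real n+1)/(2*(real n+1)))^2 * (2*real n+3) * (WW n * (4*(real n+1)^2 / (4*(real n+1)^2 - 1)))"
  proof -
    have c: "cc (Suc n) = cc n * ((2*real n+1)/(2*(real n+1)))" using cc_Suc'[of n] by simp
    have d: "2 * real (Suc n) + 1 = 2*real n+3" by simp
    show ?thesis unfolding c d W power_mult_distrib ..
  qed
  also have "\<dots> = 1" by (rule wallis_aux) (use Suc in auto)
  finally show ?case .
qed

lemma cc_lim: "(\<lambda>n. cc n ^ 2 * (2 * real n + 1)) \<longlonglongrightarrow> 2 / pi"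
proof -
  have W: "WW \<longlonglongrightarrow> pi / 2" unfolding WW_def by (rule wallis)
  have "(\<lambda>n. 1 / WW n) \<longlonglongrightarrow> 1 / (pi / 2)" by (intro tendsto_divide W tendsto_const) auto
  moreover have "cc n ^ 2 * (2 * real n + 1) = 1 / WW n" for n
    using cc_WW[of n] by (metis eq_divide_eq mult_zero_right zero_neq_one)
  ultimately show ?thesis by simp
qed

lemma G0_lim: "(\<lambda>k. GG 0 k) \<longlonglongrightarrow> 8 / pi^2"
proof -
  have r: "(\<lambda>k. (8*real k^2 + 4*real k + 1) / (2*real k + 1)^2) \<longlonglongrightarrow> 2" by real_asymp
  have "(\<lambda>k. (cc k ^ 2 * (2 * real k + 1))^2 * ((8*real k^2 + 4*real k + 1) / (2*real k + 1)^2))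
        \<longlonglongrightarrow> (2/pi)^2 * 2"
    by (intro tendsto_intros cc_lim r)
  moreover have "GG 0 k = (cc k ^ 2 * (2 * real k + 1))^2 * ((8*real k^2 + 4*real k + 1) / (2*real k + 1)^2)" for k
  proof -
    have "(2*real k + 1)^2 > 0" by simp
    thus ?thesis by (simp add: GG_def Bs_def PP_def field_simps power2_eq_square power4_eq_xxxx)
  qed
  ultimately show ?thesis by (simp add: power2_eq_square)
qed

lemma SS0: "SS 0 = 8 / pi^2"
proof -
  define Q where "Q = (\<Sum>n. qq (Suc n))"
  have tail: "SS k = GG 0 k + (\<Sum>n. GG (Suc n) k)" for k
    unfolding SS_def using suminf_split_head[OF summable_GG[of k]] by simp
  have tb: "norm (\<Sum>n. GG (Suc n) k) \<le> 41 * Q / (real k + 1)^2" for k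
  proof -
    have s1: "summable (\<lambda>n. GG (Suc n) k)" using summable_GG[of k] by (subst summable_Suc_iff)
    have s2: "summable (\<lambda>n. 41 * qq (Suc n) / (real k + 1)^2)"
      by (intro summable_divide summable_mult summable_qq_Suc)
    have b: "norm (GG (Suc n) k) \<le> 41 * qq (Suc n) / (real k + 1)^2" for n
      using GG_bound'[of "Suc n" k] by simp
    have s3: "summable (\<lambda>n. norm (GG (Suc n) k))"
      by (rule summable_comparison_test'[OF s2]) (use b in simp)
    have "norm (\<Sum>n. GG (Suc n) k) \<le> (\<Sum>n. norm (GG (Suc n) k))"
      by (rule summable_norm[OF s3])
    also have "\<dots> \<le> (\<Sum>n. 41 * qq (Suc n) / (real k + 1)^2)"
      by (rule suminf_le[OF b s3 s2])
    also have "\<dots> = 41 * Q / (real k + 1)^2"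
      unfolding Q_def by (simp add: suminf_divide suminf_mult summable_qq_Suc)
    finally show ?thesis .
  qed
  have "(\<lambda>k. 41 * Q / (real k + 1)^2) \<longlonglongrightarrow> 0" by real_asymp
  hence "(\<lambda>k. \<Sum>n. GG (Suc n) k) \<longlonglongrightarrow> 0"
    by (rule Lim_null_comparison[rotated]) (use tb in auto)
  hence "(\<lambda>k. GG 0 k + (\<Sum>n. GG (Suc n) k)) \<longlonglongrightarrow> 8/pi^2 + 0"
    by (intro tendsto_add G0_lim)
  moreover have "(\<lambda>k. GG 0 k + (\<Sum>n. GG (Suc n) k)) = (\<lambda>k. SS 0)"
    by (rule ext) (metis tail SS_const)
  ultimately have "(\<lambda>k. SS 0) \<longlonglongrightarrow> 8/pi^2" by simp
  thus ?thesis by (simp add: LIMSEQ_const_iff)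
qed

lemma fin: fixes a P0 p4 x5 d :: real
  shows "((p4 - P0)/4 + 32*x5/d) * a = -1/4*(a*P0) + (a*p4/4 - (-32*x5*a/d))"
  by (simp add: algebra_simps diff_divide_distrib add_divide_distrib)

lemma gd: fixes N A B d :: real assumes "d \<noteq> 0" "N = A*d + B" shows "N/d = A + B/d"
  using assms by (simp add: field_simps)
lemma rid: fixes x :: real shows
  "(20 * x ^ 2 - 4 * x - 1) * x ^ 2 * (2 * x + 1) = ((2*x+1)^4 - (20*x^2+8*x+1))/4 * (2*x-1) + 32*x^5"
  by (simp add: field_simps eval_nat_numeral)
lemma tt: fixes t p c ss Q :: real assumes "t>0" "p>0" "Q>0"
  shows "-32 * t^5 * (-ss * (c*(p/(2*t)))^5 / (4*Q)) / p = ss * c^5 / Q * p^4 / 4"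
proof -
  have p5: "p^5 = p^4*p" by (simp add: power_Suc2[symmetric])
  have "(c*(p/(2*t)))^5 = c^5*p^5/(32*t^5)" by (simp add: power_mult_distrib power_divide)
  thus ?thesis unfolding p5 using assms by (simp add: field_simps)
qed
lemma p12: "(2::real)^(12*n) = (4^n)^5 * 4^n"
proof -
  have "(4::real)^n = 2^(2*n)" by (simp add: power_mult)
  moreover have "(2::real)^(12*n) = (2^(2*n))^5 * 2^(2*n)"
    by (simp add: power_mult[symmetric] power_add[symmetric])
  ultimately show ?thesis by simp
qed

definition aa :: "nat \<Rightarrow> real" where "aa n = (-1)^n * cc n ^ 5 / 4^n"
definition TT :: "nat \<Rightarrow> real" where "TT n = -32 * real n ^ 5 * aa n / (2 * real n - 1)"

lemma GG0: "GG n 0 = aa n * (20 * real n ^ 2 + 8 * real n + 1)"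
  by (simp add: GG_def Bs_def PP_def aa_def)

lemma TT_Suc: "TT (Suc n) = aa n * (2*real n+1)^4 / 4"
proof -
  have a: "aa (Suc n) = - ((-1)^n) * (cc n * ((2*real n+1)/(2*(real n+1))))^5 / (4 * 4^n)"
    unfolding aa_def using cc_Suc'[of n] by simp
  have c: "real (Suc n) = real n + 1" by simp
  have b: "2 * (real n + 1) - 1 = 2*real n+1" by simp
  have "TT (Suc n) = -32 * (real n+1)^5 * (- ((-1)^n) * (cc n * ((2*real n+1)/(2*(real n+1))))^5 / (4 * 4^n)) / (2*real n+1)"
    unfolding TT_def a c b by simp
  also have "\<dots> = (-1)^n * cc n ^ 5 / 4^n * (2*real n+1)^4 / 4"
    by (rule tt) auto
  finally show ?thesis by (simp add: aa_def)
qed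

lemma TT_lim: "TT \<longlonglongrightarrow> 0"
proof (rule Lim_null_comparison)
  show "(\<lambda>n. 32 * real n ^ 5 / 4^n) \<longlonglongrightarrow> 0" by real_asymp
  show "\<forall>\<^sub>F n in sequentially. norm (TT n) \<le> 32 * real n ^ 5 / 4^n"
  proof (rule always_eventually, rule allI)
    fix n :: nat
    show "norm (TT n) \<le> 32 * real n ^ 5 / 4^n"
    proof (cases "n = 0")
      case True thus ?thesis by (simp add: TT_def)
    next
      case False
      hence d: "\<bar>2 * real n - 1\<bar> \<ge> 1" by simp
      have aab: "\<bar>aa n\<bar> \<le> 1 / 4^n"
      proof -
        have "\<bar>aa n\<bar> = cc n ^ 5 / 4^n" using cc_pos[of n] by (simp add: aa_def abs_mult power_abs)
        also have "\<dots> \<le> 1 / 4^n" using cc_pos[of n] cc_le1[of n]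
          by (intro divide_right_mono power_le_one) auto
        finally show ?thesis .
      qed
      have "norm (TT n) = 32 * real n ^ 5 * \<bar>aa n\<bar> / \<bar>2 * real n - 1\<bar>"
        by (simp add: TT_def abs_mult)
      also have "\<dots> \<le> 32 * real n ^ 5 * \<bar>aa n\<bar> / 1"
        using d by (intro divide_left_mono) auto
      also have "\<dots> \<le> 32 * real n ^ 5 * (1 / 4^n)"
      proof -
        have "32 * real n ^ 5 * \<bar>aa n\<bar> \<le> 32 * real n ^ 5 * (1 / 4^n)"
          by (rule mult_left_mono[OF aab]) simp
        thus ?thesis by simp
      qed
      finally show ?thesis by simp
    qed
  qed
qed

lemma term_eq: "((20 * real n ^ 2 - 4 * real n - 1) * real n ^ 2 * (2 * real n + 1)
            / (2 * real n - 1)) * ((-1) ^ n * real ((2 * n) choose n) ^ 5 / 2 ^ (12 * n))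
   = -1/4 * GG n 0 + (TT (Suc n) - TT n)"
proof -
  have C: "real ((2 * n) choose n) = cc n * 4^n" by (simp add: cc_def)
  have e1: "(-1) ^ n * real ((2 * n) choose n) ^ 5 / 2 ^ (12 * n) = aa n"
    unfolding C p12 aa_def by (simp add: power_mult_distrib)
  have d: "2 * real n - 1 \<noteq> 0"
  proof
    assume "2 * real n - 1 = 0"
    hence "real (2*n) = real (1::nat)" by simp
    hence "2*n = 1" by (simp only: of_nat_eq_iff)
    thus False by presburger
  qed
  have r: "(20 * real n ^ 2 - 4 * real n - 1) * real n ^ 2 * (2 * real n + 1) / (2 * real n - 1)
     = ((2*real n+1)^4 - (20*real n^2+8*real n+1))/4 + 32*real n^5 / (2 * real n - 1)"
    by (rule gd[OF d rid])
  show ?thesis unfolding e1 r GG0 TT_Suc TT_def[of n] by (rule fin)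
qed

theorem mainTheorem16:
  shows "(\<lambda>n::nat. ((20 * real n ^ 2 - 4 * real n - 1) * real n ^ 2 * (2 * real n + 1)
            / (2 * real n - 1)) * ((-1) ^ n * real ((2 * n) choose n) ^ 5 / 2 ^ (12 * n)))
         sums (- 2 / pi ^ 2)"
proof -
  have g: "(\<lambda>n. GG n 0) sums (8 / pi^2)"
    using summable_sums[OF summable_GG[of 0]] SS0 by (simp add: SS_def)
  have s1: "(\<lambda>n. -1/4 * GG n 0) sums (-1/4 * (8 / pi^2))" by (rule sums_mult[OF g])
  have s2: "(\<lambda>n. TT (Suc n) - TT n) sums (0 - TT 0)" by (rule telescope_sums[OF TT_lim])
  have eq: "-1/4 * (8 / pi^2) + (0 - TT 0) = - 2 / pi ^ 2" by (simp add: TT_def)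
  have "(\<lambda>n. -1/4 * GG n 0 + (TT (Suc n) - TT n)) sums (- 2 / pi ^ 2)"
    using sums_add[OF s1 s2] unfolding eq .
  then show ?thesis unfolding term_eq .
qed

end
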